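(* Let $T\in\mathcal B(H)$ be such that $\mathcal A_T$ admits a gauge action. Then either $\mathcal A_T$ is semisimple (its Jacobson radical is $(0)$) or $\mathcal A_T$ is a radical algebra (its Jacobson radical is all of $\mathcal A_T$).
   Context: $H$ is a complex Hilbert space, $T\in\mathcal B(H)$, and $\mathcal A_T$ is the operator-norm closure in $\mathcal B(H)$ of the polynomials $p(T)$ with $p(0)=0$; it is a commutative (possibly non-unital) Banach algebra. A gauge action on $\mathcal A_T$ is a group homomorphism $\lambda\mapsto\gamma_\lambda$ from the unit circle $\mathbb T$ into the isometric algebra automorphisms of $\mathcal A_T$ such that $\gamma_\lambda(T)=\lambda T$ for all $\lambda$ and $\lambda\mapsto\gamma_\lambda(S)$ is norm continuous for each $S\in\mathcal A_T$. *)

theory Defs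
  imports "HOL-Analysis.Analysis"
begin

class complex_vector = real_vector +
  fixes scaleC :: "complex \<Rightarrow> 'a \<Rightarrow> 'a"  (infixr \<open>*\<^sub>C\<close> 75)
  assumes scaleC_add_right: "c *\<^sub>C (x + y) = c *\<^sub>C x + c *\<^sub>C y"
    and scaleC_add_left: "(b + c) *\<^sub>C x = b *\<^sub>C x + c *\<^sub>C x"
    and scaleC_scaleC: "b *\<^sub>C (c *\<^sub>C x) = (b * c) *\<^sub>C x"
    and scaleC_one: "1 *\<^sub>C x = x"
    and scaleR_scaleC: "scaleR r = scaleC (complex_of_real r)"

class complex_inner = complex_vector + real_normed_vector +
  fixes cinner :: "'a \<Rightarrow> 'a \<Rightarrow> complex"
  assumes cinner_commute: "cinner x y = cnj (cinner y x)"
    and cinner_add_left: "cinner (x + y) z = cinner x z + cinner y z"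
    and cinner_scaleC_left: "cinner (c *\<^sub>C x) y = cnj c * cinner x y"
    and cinner_self_real: "Im (cinner x x) = 0"
    and cinner_self_nonneg: "0 \<le> Re (cinner x x)"
    and cinner_eq_zero_iff: "cinner x x = 0 \<longleftrightarrow> x = 0"
    and norm_eq_sqrt_cinner: "norm x = sqrt (Re (cinner x x))"

class chilbert_space = complex_inner + complete_space

text \<open>B(H): bounded (real-linear, continuous) maps that are complex linear.
  The norm of blinfun is the operator norm.\<close>
definition bounded_ops :: "('h::chilbert_space \<Rightarrow>\<^sub>L 'h) set" where
  "bounded_ops = {T. \<forall>c x. blinfun_apply T (c *\<^sub>C x) = c *\<^sub>C blinfun_apply T x}"

definition op_scaleC :: "complex \<Rightarrow> ('h::chilbert_space \<Rightarrow>\<^sub>L 'h) \<Rightarrow> ('h \<Rightarrow>\<^sub>L 'h)" where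
  "op_scaleC c T = Blinfun (\<lambda>x. c *\<^sub>C blinfun_apply T x)"

definition poly_op :: "(nat \<Rightarrow> complex) \<Rightarrow> nat \<Rightarrow> ('h::chilbert_space \<Rightarrow>\<^sub>L 'h) \<Rightarrow> ('h \<Rightarrow>\<^sub>L 'h)" where
  "poly_op a n T = Blinfun (\<lambda>x. \<Sum>k\<in>{1..n}. a k *\<^sub>C ((blinfun_apply T ^^ k) x))"

definition alg_T :: "('h::chilbert_space \<Rightarrow>\<^sub>L 'h) \<Rightarrow> ('h \<Rightarrow>\<^sub>L 'h) set" where
  "alg_T T = closure {poly_op a n T | a n. True}"

text \<open>x is left quasi-regular in A: there is c in A with c + x - c x = 0
  (i.e. (1-c)(1-x) = 1 in the unitization).\<close>
definition quasi_regular_in :: "('h::chilbert_space \<Rightarrow>\<^sub>L 'h) set \<Rightarrow> ('h \<Rightarrow>\<^sub>L 'h) \<Rightarrow> bool" where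
  "quasi_regular_in A x \<longleftrightarrow> (\<exists>c\<in>A. c + x - (c o\<^sub>L x) = 0)"

text \<open>Jacobson radical of the (possibly non-unital) algebra A (multiplication = composition):
  a is in rad A iff the left ideal generated by a, consisting of the elements
  lambda a + b a (lambda complex, b in A), is quasi-regular.\<close>
definition jacobson_radical :: "('h::chilbert_space \<Rightarrow>\<^sub>L 'h) set \<Rightarrow> ('h \<Rightarrow>\<^sub>L 'h) set" where
  "jacobson_radical A =
     {a \<in> A. \<forall>l::complex. \<forall>b\<in>A. quasi_regular_in A (op_scaleC l a + (b o\<^sub>L a))}"

definition gauge_action :: "('h::chilbert_space \<Rightarrow>\<^sub>L 'h) \<Rightarrow> (complex \<Rightarrow> ('h \<Rightarrow>\<^sub>L 'h) \<Rightarrow> ('h \<Rightarrow>\<^sub>L 'h)) \<Rightarrow> bool" where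
  "gauge_action T \<gamma> \<longleftrightarrow>
     (\<forall>l. cmod l = 1 \<longrightarrow>
        bij_betw (\<gamma> l) (alg_T T) (alg_T T) \<and>
        (\<forall>S\<in>alg_T T. \<forall>R\<in>alg_T T. \<gamma> l (S + R) = \<gamma> l S + \<gamma> l R) \<and>
        (\<forall>S\<in>alg_T T. \<forall>c. \<gamma> l (op_scaleC c S) = op_scaleC c (\<gamma> l S)) \<and>
        (\<forall>S\<in>alg_T T. \<forall>R\<in>alg_T T. \<gamma> l (S o\<^sub>L R) = \<gamma> l S o\<^sub>L \<gamma> l R) \<and>
        (\<forall>S\<in>alg_T T. norm (\<gamma> l S) = norm S) \<and>
        \<gamma> l T = op_scaleC l T) \<and>
     (\<forall>l m. cmod l = 1 \<longrightarrow> cmod m = 1 \<longrightarrow> (\<forall>S\<in>alg_T T. \<gamma> (l * m) S = \<gamma> l (\<gamma> m S))) \<and>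
     (\<forall>S\<in>alg_T T. continuous_on {l. cmod l = 1} (\<lambda>l. \<gamma> l S))"

end

theory Submission
  imports Defs
begin


section \<open>Complex vector basics\<close>

lemma scaleC_zero_right[simp]: "c *\<^sub>C (0::'a::complex_vector) = 0"
proof -
  have "c *\<^sub>C (0::'a) = c *\<^sub>C 0 + c *\<^sub>C 0" by (metis add.right_neutral scaleC_add_right)
  thus ?thesis by simp
qed

lemma scaleC_zero_left[simp]: "0 *\<^sub>C (x::'a::complex_vector) = 0"
  by (metis of_real_0 scaleR_scaleC scale_zero_left)

lemma scaleC_minus_right: "c *\<^sub>C (- (x::'a::complex_vector)) = - (c *\<^sub>C x)"
  by (metis add.right_inverse eq_neg_iff_add_eq_0 scaleC_add_right scaleC_zero_right)

lemma scaleC_diff_right: "c *\<^sub>C ((x::'a::complex_vector) - y) = c *\<^sub>C x - c *\<^sub>C y"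
  by (metis diff_conv_add_uminus scaleC_add_right scaleC_minus_right)

lemma scaleC_minus_one: "(-1) *\<^sub>C (x::'a::complex_vector) = - x"
  by (metis of_real_1 of_real_minus scaleR_minus1_left scaleR_scaleC)

lemma scaleC_sum_right: "c *\<^sub>C (\<Sum>i\<in>I. f i) = (\<Sum>i\<in>I. c *\<^sub>C (f i::'a::complex_vector))"
  by (induction I rule: infinite_finite_induct) (auto simp: scaleC_add_right)

lemma scaleC_sum_left: "(\<Sum>i\<in>I. f i) *\<^sub>C (x::'a::complex_vector) = (\<Sum>i\<in>I. f i *\<^sub>C x)"
  by (induction I rule: infinite_finite_induct) (auto simp: scaleC_add_left)

lemma scaleR_scaleC': "r *\<^sub>R (x::'a::complex_vector) = complex_of_real r *\<^sub>C x"
  by (simp add: scaleR_scaleC)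

lemma cinner_scaleC_right: "cinner x (c *\<^sub>C y) = c * cinner x (y::'a::complex_inner)"
  by (metis cinner_commute cinner_scaleC_left complex_cnj_cnj complex_cnj_mult)

lemma norm_scaleC[simp]: "norm (c *\<^sub>C (x::'a::complex_inner)) = cmod c * norm x"
proof -
  have "cinner (c *\<^sub>C x) (c *\<^sub>C x) = (cnj c * c) * cinner x x"
    by (simp add: cinner_scaleC_left cinner_scaleC_right)
  also have "cnj c * c = complex_of_real ((cmod c)^2)"
    using complex_norm_square by (simp add: mult.commute)
  finally have "Re (cinner (c *\<^sub>C x) (c *\<^sub>C x)) = (cmod c)^2 * Re (cinner x x)"
    by simp
  thus ?thesis by (simp add: norm_eq_sqrt_cinner real_sqrt_mult)
qed

lemma bounded_linear_scaleC: "bounded_linear (\<lambda>x::'a::complex_inner. c *\<^sub>C x)"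
proof
  fix x y :: 'a show "c *\<^sub>C (x + y) = c *\<^sub>C x + c *\<^sub>C y" by (rule scaleC_add_right)
  fix r :: real show "c *\<^sub>C (r *\<^sub>R x) = r *\<^sub>R (c *\<^sub>C x)"
    by (simp add: scaleR_scaleC scaleC_scaleC mult.commute)
  show "\<exists>K. \<forall>x. norm (c *\<^sub>C (x::'a)) \<le> norm x * K"
    by (rule exI[of _ "cmod c"]) (simp add: mult.commute)
qed

lemma continuous_scaleC_right[continuous_intros]:
  "continuous_on S f \<Longrightarrow> continuous_on S (\<lambda>t. c *\<^sub>C (f t::'a::complex_inner))"
  using bounded_linear.continuous_on[OF bounded_linear_scaleC] by blast

section \<open>Operators\<close>

lemma op_scaleC_apply[simp]: "blinfun_apply (op_scaleC c S) x = c *\<^sub>C blinfun_apply S x"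
proof -
  have "bounded_linear (\<lambda>x. c *\<^sub>C blinfun_apply S x)"
    using bounded_linear_compose[OF bounded_linear_scaleC blinfun.bounded_linear_right] by blast
  thus ?thesis unfolding op_scaleC_def by (simp add: bounded_linear_Blinfun_apply)
qed

lemma norm_op_scaleC: "norm (op_scaleC c (S::'h::chilbert_space \<Rightarrow>\<^sub>L 'h)) \<le> cmod c * norm S"
  by (rule norm_blinfun_bound) (auto simp: mult.assoc intro!: mult_left_mono norm_blinfun)

lemma op_scaleC_add_right: "op_scaleC c (S + R) = op_scaleC c S + op_scaleC c R"
  by (rule blinfun_eqI) (simp add: blinfun.add_left scaleC_add_right)
lemma op_scaleC_add_left: "op_scaleC (c + d) S = op_scaleC c S + op_scaleC d S"
  by (rule blinfun_eqI) (simp add: blinfun.add_left scaleC_add_left)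
lemma op_scaleC_diff_right: "op_scaleC c (S - R) = op_scaleC c S - op_scaleC c R"
  by (rule blinfun_eqI) (simp add: blinfun.diff_left scaleC_diff_right)
lemma op_scaleC_scaleC: "op_scaleC c (op_scaleC d S) = op_scaleC (c * d) S"
  by (rule blinfun_eqI) (simp add: scaleC_scaleC)
lemma op_scaleC_one[simp]: "op_scaleC 1 S = S"
  by (rule blinfun_eqI) (simp add: scaleC_one)
lemma op_scaleC_zero[simp]: "op_scaleC 0 S = 0"
  by (rule blinfun_eqI) simp
lemma op_scaleC_zero_right[simp]: "op_scaleC c 0 = 0"
  by (rule blinfun_eqI) simp
lemma op_scaleC_minus_one: "op_scaleC (-1) S = - S"
  by (rule blinfun_eqI) (simp add: scaleC_minus_one blinfun.minus_left)
lemma op_scaleC_real: "op_scaleC (complex_of_real r) S = r *\<^sub>R S"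
  by (rule blinfun_eqI) (simp add: scaleR_scaleC blinfun.scaleR_left)
lemma op_scaleC_sum_right: "op_scaleC c (\<Sum>i\<in>I. f i) = (\<Sum>i\<in>I. op_scaleC c (f i))"
  by (induction I rule: infinite_finite_induct) (auto simp: op_scaleC_add_right)
lemma op_scaleC_sum_left: "op_scaleC (\<Sum>i\<in>I. f i) S = (\<Sum>i\<in>I. op_scaleC (f i) S)"
  by (induction I rule: infinite_finite_induct) (auto simp: op_scaleC_add_left)

lemma op_scaleC_compose_left: "op_scaleC c (S o\<^sub>L R) = op_scaleC c S o\<^sub>L R"
  by (rule blinfun_eqI) simp

lemma op_scaleC_compose_right:
  "S \<in> bounded_ops \<Longrightarrow> op_scaleC c (S o\<^sub>L R) = S o\<^sub>L op_scaleC c R"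
  by (rule blinfun_eqI) (simp add: bounded_ops_def)

lemma compose_assoc: "(a o\<^sub>L b) o\<^sub>L c = a o\<^sub>L (b o\<^sub>L c)"
  by (rule blinfun_eqI) simp
lemma compose_add_left: "(a + b) o\<^sub>L c = (a o\<^sub>L c) + (b o\<^sub>L c)"
  by (rule blinfun_eqI) (simp add: blinfun.add_left)
lemma compose_add_right: "c o\<^sub>L (a + b) = (c o\<^sub>L a) + (c o\<^sub>L b)"
  by (rule blinfun_eqI) (simp add: blinfun.add_left blinfun.add_right)
lemma compose_diff_left: "(a - b) o\<^sub>L c = (a o\<^sub>L c) - (b o\<^sub>L c)"
  by (rule blinfun_eqI) (simp add: blinfun.diff_left)
lemma compose_diff_right: "c o\<^sub>L (a - b) = (c o\<^sub>L a) - (c o\<^sub>L b)"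
  by (rule blinfun_eqI) (simp add: blinfun.diff_left blinfun.diff_right)
lemma compose_id_left[simp]: "id_blinfun o\<^sub>L a = a"
  by (rule blinfun_eqI) simp
lemma compose_id_right[simp]: "a o\<^sub>L id_blinfun = a"
  by (rule blinfun_eqI) simp
lemma compose_sum_left: "(\<Sum>i\<in>I. f i) o\<^sub>L c = (\<Sum>i\<in>I. f i o\<^sub>L c)"
  by (induction I rule: infinite_finite_induct) (auto simp: compose_add_left)
lemma compose_sum_right: "c o\<^sub>L (\<Sum>i\<in>I. f i) = (\<Sum>i\<in>I. c o\<^sub>L f i)"
  by (induction I rule: infinite_finite_induct) (auto simp: compose_add_right)

lemma closed_bounded_ops: "closed (bounded_ops :: ('h::chilbert_space \<Rightarrow>\<^sub>L 'h) set)"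
proof -
  have eq: "bounded_ops = (\<Inter>c. \<Inter>x. {T::'h \<Rightarrow>\<^sub>L 'h. blinfun_apply T (c *\<^sub>C x) - c *\<^sub>C blinfun_apply T x = 0})"
    by (auto simp: bounded_ops_def)
  have cl: "closed {T::'h \<Rightarrow>\<^sub>L 'h. blinfun_apply T (c *\<^sub>C x) - c *\<^sub>C blinfun_apply T x = 0}" for c x
    by (intro closed_Collect_eq continuous_intros continuous_on_id) 
  show ?thesis unfolding eq by (intro closed_INT ballI) (rule cl)
qed

lemma bounded_ops_add: "S \<in> bounded_ops \<Longrightarrow> R \<in> bounded_ops \<Longrightarrow> S + R \<in> bounded_ops"
  by (auto simp: bounded_ops_def blinfun.add_left scaleC_add_right)
lemma bounded_ops_scale: "S \<in> bounded_ops \<Longrightarrow> op_scaleC c S \<in> bounded_ops"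
  by (auto simp: bounded_ops_def scaleC_scaleC mult.commute)
lemma bounded_ops_compose: "S \<in> bounded_ops \<Longrightarrow> R \<in> bounded_ops \<Longrightarrow> S o\<^sub>L R \<in> bounded_ops"
  by (auto simp: bounded_ops_def)
lemma bounded_ops_id: "id_blinfun \<in> bounded_ops"
  by (auto simp: bounded_ops_def)
lemma bounded_ops_zero: "0 \<in> bounded_ops"
  by (auto simp: bounded_ops_def)



primrec pw :: "('h::chilbert_space \<Rightarrow>\<^sub>L 'h) \<Rightarrow> nat \<Rightarrow> ('h \<Rightarrow>\<^sub>L 'h)" where
  "pw S 0 = id_blinfun"
| "pw S (Suc n) = S o\<^sub>L pw S n"

lemma pw_apply: "blinfun_apply (pw S n) = (blinfun_apply S ^^ n)"
  by (induction n) (auto simp: fun_eq_iff)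

lemma pw_one[simp]: "pw S 1 = S"
  by simp

lemma pw_add: "pw S (m + n) = pw S m o\<^sub>L pw S n"
  by (induction m) (auto simp: compose_assoc)

lemma pw_Suc': "pw S (Suc n) = pw S n o\<^sub>L S"
  using pw_add[of S n 1] by simp

lemma pw_bounded_ops: "S \<in> bounded_ops \<Longrightarrow> pw S n \<in> bounded_ops"
  by (induction n) (auto intro: bounded_ops_id bounded_ops_compose)

lemma blinfun_apply_sum: "blinfun_apply (\<Sum>i\<in>I. f i) x = (\<Sum>i\<in>I. blinfun_apply (f i) x)"
  by (induction I rule: infinite_finite_induct) (auto simp: blinfun.add_left)

lemma poly_op_eq: "poly_op a n T = (\<Sum>k\<in>{1..n}. op_scaleC (a k) (pw T k))"
proof -
  have "(\<lambda>x. \<Sum>k\<in>{1..n}. a k *\<^sub>C ((blinfun_apply T ^^ k) x)) = blinfun_apply (\<Sum>k\<in>{1..n}. op_scaleC (a k) (pw T k))"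
    by (auto simp: fun_eq_iff blinfun_apply_sum pw_apply)
  thus ?thesis unfolding poly_op_def by (simp add: blinfun_apply_inverse)
qed

definition polys :: "('h::chilbert_space \<Rightarrow>\<^sub>L 'h) \<Rightarrow> ('h \<Rightarrow>\<^sub>L 'h) set" where
  "polys T = {poly_op a n T | a n. True}"

lemma alg_T_polys: "alg_T T = closure (polys T)"
  unfolding alg_T_def polys_def by simp

lemma poly_op_pad:
  assumes "n \<le> m"
  shows "poly_op a n T = poly_op (\<lambda>k. if k \<le> n then a k else 0) m T"
  unfolding poly_op_eq
  by (rule sum.mono_neutral_cong_left) (use assms in auto)

lemma polys_add: "x \<in> polys T \<Longrightarrow> y \<in> polys T \<Longrightarrow> x + y \<in> polys T"
proof -
  assume "x \<in> polys T" "y \<in> polys T"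
  then obtain a n b m where x: "x = poly_op a n T" and y: "y = poly_op b m T"
    by (auto simp: polys_def)
  let ?a = "\<lambda>k. if k \<le> n then a k else 0" and ?b = "\<lambda>k. if k \<le> m then b k else 0"
  have "x + y = poly_op ?a (max n m) T + poly_op ?b (max n m) T"
    unfolding x y by (subst poly_op_pad[of n "max n m"], simp, subst poly_op_pad[of m "max n m"], simp_all)
  also have "\<dots> = poly_op (\<lambda>k. ?a k + ?b k) (max n m) T"
    unfolding poly_op_eq by (simp add: op_scaleC_add_left sum.distrib)
  finally show ?thesis by (auto simp: polys_def)
qed

lemma polys_zero: "0 \<in> polys T"
proof -
  have "0 = poly_op (\<lambda>_. 0) 0 T" unfolding poly_op_eq by simp
  thus ?thesis unfolding polys_def by blast
qed

lemma polys_sum: "(\<And>i. i \<in> I \<Longrightarrow> f i \<in> polys T) \<Longrightarrow> (\<Sum>i\<in>I. f i) \<in> polys T"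
  by (induction I rule: infinite_finite_induct) (auto intro: polys_add polys_zero)

lemma polys_scale: "x \<in> polys T \<Longrightarrow> op_scaleC c x \<in> polys T"
proof -
  assume "x \<in> polys T"
  then obtain a n where x: "x = poly_op a n T" by (auto simp: polys_def)
  have "op_scaleC c x = poly_op (\<lambda>k. c * a k) n T"
    unfolding x poly_op_eq by (simp add: op_scaleC_sum_right op_scaleC_scaleC)
  thus ?thesis by (auto simp: polys_def)
qed

lemma polys_pw: "k \<ge> 1 \<Longrightarrow> op_scaleC c (pw T k) \<in> polys T"
proof -
  assume k: "k \<ge> 1"
  have "poly_op (\<lambda>j. if j = k then c else 0) k T = op_scaleC c (pw T k)"
  proof -
    have "\<And>j. op_scaleC (if j = k then c else 0) (pw T j) = (if j = k then op_scaleC c (pw T k) else 0)"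
      by auto
    thus ?thesis unfolding poly_op_eq using k by (simp add: sum.delta')
  qed
  thus ?thesis unfolding polys_def by (metis (mono_tags, lifting) mem_Collect_eq)
qed

lemma polys_T: "T \<in> polys T"
  using polys_pw[of 1 1 T] by simp

lemma scale_compose_scale:
  "X \<in> bounded_ops \<Longrightarrow> op_scaleC a X o\<^sub>L op_scaleC b Y = op_scaleC (a * b) (X o\<^sub>L Y)"
  by (rule blinfun_eqI) (simp add: bounded_ops_def scaleC_scaleC)

lemma poly_compose_expand:
  assumes "T \<in> bounded_ops"
  shows "poly_op a n T o\<^sub>L poly_op b m T =
     (\<Sum>i\<in>{1..n}. \<Sum>j\<in>{1..m}. op_scaleC (a i * b j) (pw T (i + j)))"
  unfolding poly_op_eq compose_sum_left compose_sum_right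
  apply (simp add: scale_compose_scale pw_bounded_ops[OF assms] pw_add[symmetric])
  apply (subst sum.swap) apply (rule refl)
  done

lemma polys_compose:
  assumes "T \<in> bounded_ops" "x \<in> polys T" "y \<in> polys T"
  shows "x o\<^sub>L y \<in> polys T"
proof -
  obtain a n b m where x: "x = poly_op a n T" and y: "y = poly_op b m T"
    using assms by (auto simp: polys_def)
  show ?thesis unfolding x y poly_compose_expand[OF assms(1)]
    by (intro polys_sum polys_pw) auto
qed

lemma polys_commute:
  assumes "T \<in> bounded_ops" "x \<in> polys T" "y \<in> polys T"
  shows "x o\<^sub>L y = y o\<^sub>L x"
proof -
  obtain a n b m where x: "x = poly_op a n T" and y: "y = poly_op b m T"
    using assms by (auto simp: polys_def)
  show ?thesis unfolding x y poly_compose_expand[OF assms(1)]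
    by (subst sum.swap) (simp add: mult.commute add.commute)
qed

lemma polys_bounded_ops:
  assumes "T \<in> bounded_ops" "x \<in> polys T" shows "x \<in> bounded_ops"
proof -
  obtain a n where x: "x = poly_op a n T" using assms by (auto simp: polys_def)
  have "(\<Sum>k\<in>{1..n}. op_scaleC (a k) (pw T k)) \<in> bounded_ops"
    by (induction n) (auto intro!: bounded_ops_add bounded_ops_scale pw_bounded_ops assms(1)
        bounded_ops_compose simp: bounded_ops_zero simp del: pw.simps)
  thus ?thesis unfolding x poly_op_eq .
qed

lemma closure_binop:
  assumes "\<And>x y. x \<in> S \<Longrightarrow> y \<in> S \<Longrightarrow> f x y \<in> S"
    and "continuous_on UNIV (\<lambda>p. f (fst p) (snd p))"
    and "x \<in> closure S" "y \<in> closure S"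
  shows "f x y \<in> closure S"
proof -
  have "(\<lambda>p. f (fst p) (snd p)) ` closure (S \<times> S) \<subseteq> closure S"
    by (rule image_closure_subset) (use assms(1,2) in \<open>auto intro: continuous_on_subset closure_subset[THEN subsetD]\<close>)
  hence "(\<lambda>p. f (fst p) (snd p)) ` (closure S \<times> closure S) \<subseteq> closure S" by (simp add: closure_Times)
  moreover have "(x, y) \<in> closure S \<times> closure S" using assms(3,4) by simp
  ultimately show ?thesis by force
qed

lemma closure_unop:
  assumes "\<And>x. x \<in> S \<Longrightarrow> f x \<in> S"
    and "continuous_on UNIV f"
    and "x \<in> closure S"
  shows "f x \<in> closure S"
proof -
  have "f ` closure S \<subseteq> closure S"
    by (rule image_closure_subset) (use assms(1,2) in \<open>auto intro: continuous_on_subset closure_subset[THEN subsetD]\<close>)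
  thus ?thesis using assms(3) by auto
qed

lemma continuous_op_scaleC: "continuous_on UNIV (op_scaleC c :: ('h::chilbert_space \<Rightarrow>\<^sub>L 'h) \<Rightarrow> _)"
proof -
  have "op_scaleC c = (\<lambda>S::'h \<Rightarrow>\<^sub>L 'h. Blinfun (\<lambda>x. c *\<^sub>C x) o\<^sub>L S)"
    by (auto simp: fun_eq_iff intro!: blinfun_eqI simp: bounded_linear_Blinfun_apply[OF bounded_linear_scaleC])
  thus ?thesis by (auto intro!: continuous_intros)
qed

section \<open>The algebra A_T\<close>

context
  fixes T :: "'h::chilbert_space \<Rightarrow>\<^sub>L 'h"
  assumes Tb: "T \<in> bounded_ops"
begin

lemma alg_add: "x \<in> alg_T T \<Longrightarrow> y \<in> alg_T T \<Longrightarrow> x + y \<in> alg_T T"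
  unfolding alg_T_polys
proof (rule closure_binop[where f="(+)"])
  show "continuous_on UNIV (\<lambda>p::('h \<Rightarrow>\<^sub>L 'h) \<times> ('h \<Rightarrow>\<^sub>L 'h). fst p + snd p)"
    by (intro continuous_intros)
qed (auto intro: polys_add)

lemma alg_compose: "x \<in> alg_T T \<Longrightarrow> y \<in> alg_T T \<Longrightarrow> x o\<^sub>L y \<in> alg_T T"
  unfolding alg_T_polys
proof (rule closure_binop[where f="(o\<^sub>L)"])
  show "continuous_on UNIV (\<lambda>p::('h \<Rightarrow>\<^sub>L 'h) \<times> ('h \<Rightarrow>\<^sub>L 'h). fst p o\<^sub>L snd p)"
    by (intro continuous_intros)
qed (auto intro: polys_compose[OF Tb])

lemma alg_scale: "x \<in> alg_T T \<Longrightarrow> op_scaleC c x \<in> alg_T T"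
  unfolding alg_T_polys
  by (rule closure_unop[where f="op_scaleC c"]) (auto intro: polys_scale continuous_op_scaleC)

lemma alg_minus: "x \<in> alg_T T \<Longrightarrow> - x \<in> alg_T T"
  using alg_scale[of x "-1"] by (simp add: op_scaleC_minus_one)

lemma alg_diff: "x \<in> alg_T T \<Longrightarrow> y \<in> alg_T T \<Longrightarrow> x - y \<in> alg_T T"
  using alg_add[of x "-y"] alg_minus[of y] by simp

lemma alg_zero: "0 \<in> alg_T T"
  unfolding alg_T_polys using polys_zero closure_subset by blast

lemma alg_T_in: "T \<in> alg_T T"
  unfolding alg_T_polys using polys_T closure_subset by blast

lemma polys_sub_alg: "polys T \<subseteq> alg_T T"
  unfolding alg_T_polys using closure_subset by blast

lemma alg_sum: "(\<And>i. i \<in> I \<Longrightarrow> f i \<in> alg_T T) \<Longrightarrow> (\<Sum>i\<in>I. f i) \<in> alg_T T"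
  by (induction I rule: infinite_finite_induct) (auto intro: alg_add alg_zero)

lemma closed_alg: "closed (alg_T T)"
  unfolding alg_T_polys by simp

lemma alg_bounded_ops: "x \<in> alg_T T \<Longrightarrow> x \<in> bounded_ops"
  unfolding alg_T_polys
  using closure_minimal[OF _ closed_bounded_ops, of "polys T"] polys_bounded_ops[OF Tb] by blast

lemma alg_commute: "x \<in> alg_T T \<Longrightarrow> y \<in> alg_T T \<Longrightarrow> x o\<^sub>L y = y o\<^sub>L x"
proof -
  assume x: "x \<in> alg_T T" and y: "y \<in> alg_T T"
  let ?C = "{p :: ('h \<Rightarrow>\<^sub>L 'h) \<times> ('h \<Rightarrow>\<^sub>L 'h). (fst p o\<^sub>L snd p) - (snd p o\<^sub>L fst p) = 0}"
  have "closed ?C" by (intro closed_Collect_eq continuous_intros)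
  moreover have "polys T \<times> polys T \<subseteq> ?C" using polys_commute[OF Tb] by auto
  ultimately have "closure (polys T \<times> polys T) \<subseteq> ?C" by (rule closure_minimal[rotated])
  hence "(x, y) \<in> ?C" using x y unfolding alg_T_polys closure_Times by blast
  hence "(x o\<^sub>L y) - (y o\<^sub>L x) = 0" by simp
  thus ?thesis by (simp only: right_minus_eq)
qed

lemma alg_pw: "k \<ge> 1 \<Longrightarrow> pw T k \<in> alg_T T"
  using polys_pw[of k 1 T] polys_sub_alg by auto

end


abbreviation "Id1 \<equiv> id_blinfun"

lemma omc: "(Id1 - c) o\<^sub>L (Id1 - x) = Id1 - (c + x - (c o\<^sub>L x))"
  by (rule blinfun_eqI) (simp add: blinfun.diff_left blinfun.add_left blinfun.diff_right algebra_simps)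

lemma qr_iff: "quasi_regular_in A x \<longleftrightarrow> (\<exists>c\<in>A. (Id1 - c) o\<^sub>L (Id1 - x) = Id1)"
proof -
  have "\<And>y. (Id1 - y = Id1) = (y = 0)" by auto
  thus ?thesis unfolding quasi_regular_in_def omc apply simp apply (rule bex_cong[OF refl]) by auto
qed

lemma qr_chain:
  assumes "(Id1 - c) o\<^sub>L (Id1 - x) = Id1 - y" "(Id1 - d) o\<^sub>L (Id1 - y) = Id1"
  shows "(Id1 - (d + c - (d o\<^sub>L c))) o\<^sub>L (Id1 - x) = Id1"
proof -
  have "(Id1 - (d + c - (d o\<^sub>L c))) o\<^sub>L (Id1 - x) = ((Id1 - d) o\<^sub>L (Id1 - c)) o\<^sub>L (Id1 - x)"
    by (simp add: omc)
  also have "\<dots> = Id1" by (simp add: compose_assoc assms)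
  finally show ?thesis .
qed

context
  fixes T :: "'h::chilbert_space \<Rightarrow>\<^sub>L 'h"
  assumes Tb: "T \<in> bounded_ops"
begin

abbreviation "AA \<equiv> alg_T T"
abbreviation "JJ \<equiv> jacobson_radical (alg_T T)"

lemma J_sub: "a \<in> JJ \<Longrightarrow> a \<in> AA"
  by (simp add: jacobson_radical_def)

lemma J_qr: "a \<in> JJ \<Longrightarrow> quasi_regular_in AA a"
  unfolding jacobson_radical_def using alg_zero[OF Tb]
  by (auto dest!: spec[of _ 1] bspec[of _ _ 0])

lemma J_lam:
  assumes a: "a \<in> JJ" and b: "b \<in> AA"
  shows "op_scaleC l a + (b o\<^sub>L a) \<in> JJ"
proof -
  have aA: "a \<in> AA" using a J_sub by blast
  have inA: "op_scaleC l a + (b o\<^sub>L a) \<in> AA"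
    by (intro alg_add alg_scale alg_compose Tb aA b)
  have "quasi_regular_in AA (op_scaleC l' (op_scaleC l a + (b o\<^sub>L a)) + (b' o\<^sub>L (op_scaleC l a + (b o\<^sub>L a))))"
    if b': "b' \<in> AA" for l' b'
  proof -
    have bb: "b' \<in> bounded_ops" using alg_bounded_ops[OF Tb b'] .
    have eq: "op_scaleC l' (op_scaleC l a + (b o\<^sub>L a)) + (b' o\<^sub>L (op_scaleC l a + (b o\<^sub>L a)))
      = op_scaleC (l' * l) a + ((op_scaleC l' b + op_scaleC l b' + (b' o\<^sub>L b)) o\<^sub>L a)"
      by (rule blinfun_eqI) (use bb in \<open>simp add: blinfun.add_left blinfun.add_right scaleC_add_right
            scaleC_scaleC bounded_ops_def algebra_simps\<close>)
    have "op_scaleC l' b + op_scaleC l b' + (b' o\<^sub>L b) \<in> AA"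
      by (intro alg_add alg_scale alg_compose Tb b b')
    with a show ?thesis unfolding eq jacobson_radical_def by blast
  qed
  with inA show ?thesis unfolding jacobson_radical_def by blast
qed

lemma J_scale: "a \<in> JJ \<Longrightarrow> op_scaleC l a \<in> JJ"
  using J_lam[of a 0 l] alg_zero[OF Tb] by simp

lemma J_compose: "a \<in> JJ \<Longrightarrow> b \<in> AA \<Longrightarrow> (b o\<^sub>L a) \<in> JJ"
  using J_lam[of a b 0] by simp

lemma J_zero: "0 \<in> JJ"
proof -
  have "quasi_regular_in AA x" if "x = 0" for x
    unfolding quasi_regular_in_def using that alg_zero[OF Tb] by (intro bexI[of _ 0]) auto
  hence "\<forall>l. \<forall>b\<in>AA. quasi_regular_in AA (op_scaleC l 0 + (b o\<^sub>L 0))" by simp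
  thus ?thesis unfolding jacobson_radical_def using alg_zero[OF Tb] by blast
qed

lemma qr_add:
  assumes u: "u \<in> JJ" and u': "u' \<in> JJ"
  shows "quasi_regular_in AA (u + u')"
proof -
  obtain c where c: "c \<in> AA" "(Id1 - c) o\<^sub>L (Id1 - u) = Id1" using J_qr[OF u] qr_iff by blast
  have v: "op_scaleC 1 u' + ((- c) o\<^sub>L u') \<in> JJ" by (intro J_lam u' alg_minus Tb c)
  obtain d where d: "d \<in> AA" "(Id1 - d) o\<^sub>L (Id1 - (op_scaleC 1 u' + ((- c) o\<^sub>L u'))) = Id1"
    using J_qr[OF v] qr_iff by blast
  have "(Id1 - c) o\<^sub>L (Id1 - (u + u')) = ((Id1 - c) o\<^sub>L (Id1 - u)) - ((Id1 - c) o\<^sub>L u')"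
    by (simp add: compose_diff_right compose_add_right algebra_simps)
  also have "\<dots> = Id1 - (op_scaleC 1 u' + ((- c) o\<^sub>L u'))"
    by (simp add: c(2)) (rule blinfun_eqI, simp add: blinfun.diff_left blinfun.minus_left)
  finally have "(Id1 - (d + c - (d o\<^sub>L c))) o\<^sub>L (Id1 - (u + u')) = Id1"
    by (rule qr_chain) (rule d(2))
  moreover have "d + c - (d o\<^sub>L c) \<in> AA" by (intro alg_diff alg_add alg_compose Tb c d)
  ultimately show ?thesis unfolding qr_iff by blast
qed

lemma J_add:
  assumes a: "a \<in> JJ" and a': "a' \<in> JJ"
  shows "a + a' \<in> JJ"
proof -
  have "quasi_regular_in AA (op_scaleC l (a + a') + (b o\<^sub>L (a + a')))" if b: "b \<in> AA" for l b
  proof -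
    have "op_scaleC l (a + a') + (b o\<^sub>L (a + a')) = (op_scaleC l a + (b o\<^sub>L a)) + (op_scaleC l a' + (b o\<^sub>L a'))"
      by (simp add: op_scaleC_add_right compose_add_right algebra_simps)
    thus ?thesis using qr_add[OF J_lam[OF a b] J_lam[OF a' b]] by simp
  qed
  moreover have "a + a' \<in> AA" using a a' J_sub alg_add[OF Tb] by blast
  ultimately show ?thesis unfolding jacobson_radical_def by blast
qed

lemma J_diff: "a \<in> JJ \<Longrightarrow> a' \<in> JJ \<Longrightarrow> a - a' \<in> JJ"
  using J_add[of a "op_scaleC (-1) a'"] J_scale[of a' "-1"] by (simp add: op_scaleC_minus_one)

lemma J_sum: "(\<And>i. i \<in> I \<Longrightarrow> f i \<in> JJ) \<Longrightarrow> (\<Sum>i\<in>I. f i) \<in> JJ"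
  by (induction I rule: infinite_finite_induct) (auto intro: J_add J_zero)

end


instance chilbert_space \<subseteq> banach ..

lemma norm_pw: "norm (pw w n) \<le> norm w ^ n"
proof (induction n)
  case 0 thus ?case using norm_blinfun_id_le by simp
next
  case (Suc n)
  have "norm (pw w (Suc n)) \<le> norm w * norm (pw w n)" using norm_blinfun_compose by simp
  also have "\<dots> \<le> norm w * norm w ^ n" by (intro mult_left_mono Suc) simp
  finally show ?case by simp
qed

context
  fixes T :: "'h::chilbert_space \<Rightarrow>\<^sub>L 'h"
  assumes Tb: "T \<in> bounded_ops"
begin

lemma pw_alg: "w \<in> (AA T) \<Longrightarrow> k \<ge> 1 \<Longrightarrow> pw w k \<in> (AA T)"
proof (induction k)
  case (Suc k) thus ?case by (cases "k = 0") (auto intro: alg_compose[OF Tb])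
qed simp

lemma neumann:
  assumes w: "w \<in> (AA T)" and nw: "norm w < 1"
  shows "\<exists>s\<in>(AA T). (Id1 + s) o\<^sub>L (Id1 - w) = Id1"
proof -
  define f where "f n = pw w (Suc n)" for n
  have sf: "summable f"
  proof (rule summable_comparison_test')
    show "summable (\<lambda>n. norm w * norm w ^ n)" by (intro summable_mult summable_geometric) (use nw in simp)
    show "norm (f n) \<le> norm w * norm w ^ n" for n using norm_pw[of w "Suc n"] by (simp add: f_def)
  qed
  define s where "s = suminf f"
  have sA: "s \<in> (AA T)"
  proof (rule closed_sequentially[OF closed_alg[OF Tb]])
    show "(\<lambda>n. \<Sum>i<n. f i) \<longlonglongrightarrow> s" unfolding s_def using sf by (rule summable_LIMSEQ)
    show "(\<Sum>i<n. f i) \<in> (AA T)" for n unfolding f_def by (intro alg_sum[OF Tb] pw_alg w) auto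
  qed
  have bl: "bounded_linear (\<lambda>x::'h \<Rightarrow>\<^sub>L 'h. x o\<^sub>L w)"
    by (rule bounded_bilinear.bounded_linear_left[OF bounded_bilinear_blinfun_compose])
  have "s o\<^sub>L w = (\<Sum>n. f n o\<^sub>L w)" unfolding s_def using bounded_linear.suminf[OF bl sf] .
  also have "\<dots> = (\<Sum>n. f (Suc n))" unfolding f_def by (simp add: pw_Suc'[symmetric] del: pw.simps)
  also have "\<dots> = s - w" unfolding s_def using suminf_split_head[OF sf] by (simp add: f_def)
  finally have sw: "s o\<^sub>L w = s - w" .
  have "(Id1 + s) o\<^sub>L (Id1 - w) = Id1"
  proof (rule blinfun_eqI)
    fix x
    have "blinfun_apply s (blinfun_apply w x) = blinfun_apply s x - blinfun_apply w x"
      using arg_cong[OF sw, of "\<lambda>F. blinfun_apply F x"] by (simp add: blinfun.diff_left)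
    thus "blinfun_apply ((Id1 + s) o\<^sub>L (Id1 - w)) x = blinfun_apply Id1 x"
      by (simp add: blinfun.add_left blinfun.diff_left blinfun.diff_right)
  qed
  with sA show ?thesis by blast
qed

lemma closure_J_qr:
  assumes z: "z \<in> closure (JJ T)"
  shows "quasi_regular_in (AA T) z"
proof -
  have JA: "(JJ T) \<subseteq> (AA T)" using J_sub[OF Tb] by blast
  have zA: "z \<in> (AA T)" using closure_minimal[OF JA closed_alg[OF Tb]] z by blast
  have "\<exists>j\<in>JJ T. dist j z < 1" using z unfolding closure_approachable by (meson zero_less_one)
  then obtain j where j: "j \<in> (JJ T)" "dist j z < 1" by blast
  define w where "w = z - j"
  have wA: "w \<in> (AA T)" unfolding w_def using zA j JA by (auto intro: alg_diff[OF Tb])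
  have nw: "norm w < 1" using j(2) by (simp add: w_def dist_norm norm_minus_commute)
  obtain s where s: "s \<in> (AA T)" "(Id1 + s) o\<^sub>L (Id1 - w) = Id1" using neumann[OF wA nw] by blast
  have v: "op_scaleC 1 j + (s o\<^sub>L j) \<in> (JJ T)" by (intro J_lam Tb j s)
  obtain c where c: "c \<in> (AA T)" "(Id1 - c) o\<^sub>L (Id1 - (op_scaleC 1 j + (s o\<^sub>L j))) = Id1"
    using J_qr[OF Tb v] qr_iff by blast
  have e1: "(Id1 - (- s)) o\<^sub>L (Id1 - z) = Id1 - (op_scaleC 1 j + (s o\<^sub>L j))"
  proof -
    have hz: "Id1 - z = (Id1 - w) - j" by (simp add: w_def)
    have "(Id1 + s) o\<^sub>L (Id1 - z) = ((Id1 + s) o\<^sub>L (Id1 - w)) - ((Id1 + s) o\<^sub>L j)"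
      by (simp only: hz compose_diff_right)
    also have "\<dots> = Id1 - (op_scaleC 1 j + (s o\<^sub>L j))"
      unfolding s(2) by (rule blinfun_eqI) (simp add: blinfun.add_left blinfun.diff_left)
    finally show ?thesis by simp
  qed
  have "(Id1 - (c + - s - (c o\<^sub>L - s))) o\<^sub>L (Id1 - z) = Id1"
    by (rule qr_chain[OF e1 c(2)])
  moreover have "c + - s - (c o\<^sub>L - s) \<in> (AA T)" by (intro alg_diff alg_add alg_minus alg_compose Tb c s)
  ultimately show ?thesis unfolding qr_iff by blast
qed

lemma closed_J: "closed (JJ T)"
proof -
  have "closure (JJ T) \<subseteq> (JJ T)"
  proof
    fix y assume y: "y \<in> closure (JJ T)"
    have JA: "(JJ T) \<subseteq> (AA T)" using J_sub[OF Tb] by blast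
    have yA: "y \<in> (AA T)" using closure_minimal[OF JA closed_alg[OF Tb]] y by blast
    have "quasi_regular_in (AA T) (op_scaleC l y + (b o\<^sub>L y))" if b: "b \<in> (AA T)" for l b
    proof (rule closure_J_qr)
      show "op_scaleC l y + (b o\<^sub>L y) \<in> closure (JJ T)"
      proof (rule closure_unop[where f="\<lambda>y. op_scaleC l y + (b o\<^sub>L y)"])
        show "continuous_on UNIV (\<lambda>y. op_scaleC l y + (b o\<^sub>L y))"
          by (intro continuous_intros continuous_on_compose2[OF continuous_op_scaleC]) auto
      qed (use y b in \<open>auto intro: J_lam[OF Tb]\<close>)
    qed
    with yA show "y \<in> (JJ T)" unfolding jacobson_radical_def by blast
  qed
  thus ?thesis using closure_subset_eq by blast
qed

end


lemma pw_commute: "u o\<^sub>L T = T o\<^sub>L u \<Longrightarrow> pw u k o\<^sub>L T = T o\<^sub>L pw u k"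
proof (induction k)
  case (Suc k)
  have "pw u (Suc k) o\<^sub>L T = u o\<^sub>L (pw u k o\<^sub>L T)" by (simp only: pw.simps compose_assoc)
  also have "\<dots> = (u o\<^sub>L T) o\<^sub>L pw u k" by (simp only: Suc.IH[OF Suc.prems] compose_assoc)
  also have "\<dots> = (T o\<^sub>L u) o\<^sub>L pw u k" by (simp only: Suc.prems)
  also have "\<dots> = T o\<^sub>L pw u (Suc k)" by (simp only: pw.simps compose_assoc)
  finally show ?case .
qed simp

lemma pw_mult: "u o\<^sub>L T = T o\<^sub>L u \<Longrightarrow> pw (u o\<^sub>L T) k = pw u k o\<^sub>L pw T k"
proof (induction k)
  case (Suc k)
  have "pw (u o\<^sub>L T) (Suc k) = u o\<^sub>L (T o\<^sub>L pw u k) o\<^sub>L pw T k"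
    by (simp only: pw.simps Suc.IH[OF Suc.prems] compose_assoc)
  also have "\<dots> = u o\<^sub>L (pw u k o\<^sub>L T) o\<^sub>L pw T k" by (simp only: pw_commute[OF Suc.prems])
  finally show ?case by (simp only: pw.simps compose_assoc)
qed simp

context
  fixes T :: "'h::chilbert_space \<Rightarrow>\<^sub>L 'h"
  assumes Tb: "T \<in> bounded_ops"
begin

lemma gauge_J:
  assumes bij: "bij_betw g (AA T) (AA T)"
    and add: "\<And>S R. S \<in> AA T \<Longrightarrow> R \<in> AA T \<Longrightarrow> g (S + R) = g S + g R"
    and sc: "\<And>S c. S \<in> AA T \<Longrightarrow> g (op_scaleC c S) = op_scaleC c (g S)"
    and mul: "\<And>S R. S \<in> AA T \<Longrightarrow> R \<in> AA T \<Longrightarrow> g (S o\<^sub>L R) = g S o\<^sub>L g R"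
    and a: "a \<in> JJ T"
  shows "g a \<in> JJ T"
proof -
  have gA: "x \<in> AA T \<Longrightarrow> g x \<in> AA T" for x using bij by (auto simp: bij_betw_def)
  have g0: "g 0 = 0" using add[of 0 0] alg_zero[OF Tb] by simp
  have gd: "g (x - y) = g x - g y" if "x \<in> AA T" "y \<in> AA T" for x y
    using add[of "x - y" y] that alg_diff[OF Tb] by (simp add: algebra_simps)
  have qr: "quasi_regular_in (AA T) (g x)" if xA: "x \<in> AA T" and xq: "quasi_regular_in (AA T) x" for x
  proof -
    obtain c where c: "c \<in> AA T" "c + x - (c o\<^sub>L x) = 0" using xq unfolding quasi_regular_in_def by blast
    have "g c + g x - (g c o\<^sub>L g x) = g (c + x - (c o\<^sub>L x))"
      using c(1) xA by (simp add: gd add mul alg_add[OF Tb] alg_compose[OF Tb])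
    also have "\<dots> = 0" using c(2) g0 by simp
    finally show ?thesis unfolding quasi_regular_in_def using gA c(1) by blast
  qed
  have aA: "a \<in> AA T" using a J_sub[OF Tb] by blast
  have "quasi_regular_in (AA T) (op_scaleC l (g a) + (b o\<^sub>L g a))" if b: "b \<in> AA T" for l b
  proof -
    obtain b0 where b0: "b0 \<in> AA T" "b = g b0" using b bij unfolding bij_betw_def by blast
    have "op_scaleC l (g a) + (b o\<^sub>L g a) = g (op_scaleC l a + (b0 o\<^sub>L a))"
      using b0 aA by (simp add: add sc mul alg_scale[OF Tb] alg_compose[OF Tb])
    moreover have "op_scaleC l a + (b0 o\<^sub>L a) \<in> JJ T" by (intro J_lam Tb a b0)
    ultimately show ?thesis using qr J_sub[OF Tb] J_qr[OF Tb] by metis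
  qed
  thus ?thesis unfolding jacobson_radical_def using gA[OF aA] by blast
qed

lemma geo_pw: "(\<Sum>i<k. pw z i) o\<^sub>L (Id1 - z) = Id1 - pw z k"
proof (induction k)
  case 0 show ?case by (rule blinfun_eqI) simp
next
  case (Suc k)
  have "(\<Sum>i<Suc k. pw z i) o\<^sub>L (Id1 - z) = ((\<Sum>i<k. pw z i) o\<^sub>L (Id1 - z)) + (pw z k o\<^sub>L (Id1 - z))"
    by (simp add: compose_add_left del: pw.simps)
  also have "\<dots> = Id1 - pw z (Suc k)"
    unfolding Suc pw_Suc' by (simp add: compose_diff_right del: pw.simps)
  finally show ?case .
qed

lemma qr_from_pw:
  assumes z: "z \<in> AA T" and k: "k \<ge> 1" and q: "quasi_regular_in (AA T) (pw z k)"
  shows "quasi_regular_in (AA T) z"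
proof -
  obtain k' where k': "k = Suc k'" using k by (cases k) auto
  define v where "v = - (\<Sum>i<k'. pw z (Suc i))"
  have vA: "v \<in> AA T" unfolding v_def by (intro alg_minus alg_sum Tb pw_alg z) auto
  have "(Id1 - v) o\<^sub>L (Id1 - z) = Id1 - pw z k"
    using geo_pw[of z k] unfolding k' sum.lessThan_Suc_shift by (simp add: v_def del: pw.simps(2))
  moreover obtain c where c: "c \<in> AA T" "(Id1 - c) o\<^sub>L (Id1 - pw z k) = Id1"
    using q qr_iff by blast
  ultimately have "(Id1 - (c + v - (c o\<^sub>L v))) o\<^sub>L (Id1 - z) = Id1" by (intro qr_chain)
  moreover have "c + v - (c o\<^sub>L v) \<in> AA T" by (intro alg_diff alg_add alg_compose Tb c vA)
  ultimately show ?thesis unfolding qr_iff by blast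
qed

lemma semiprime_T:
  assumes k: "k \<ge> 1" and p: "pw T k \<in> JJ T"
  shows "T \<in> JJ T"
proof -
  have "quasi_regular_in (AA T) (op_scaleC l T + (b o\<^sub>L T))" if b: "b \<in> AA T" for l b
  proof -
    have bb: "b \<in> bounded_ops" using alg_bounded_ops[OF Tb b] .
    define u where "u = op_scaleC l Id1 + b"
    have zu: "op_scaleC l T + (b o\<^sub>L T) = u o\<^sub>L T"
      unfolding u_def by (rule blinfun_eqI) (simp add: blinfun.add_left)
    have tu: "T o\<^sub>L u = op_scaleC l T + (T o\<^sub>L b)"
      unfolding u_def using Tb by (intro blinfun_eqI) (simp add: blinfun.add_left blinfun.add_right bounded_ops_def)
    have cu: "u o\<^sub>L T = T o\<^sub>L u"
      unfolding tu zu[symmetric] using alg_commute[OF Tb b alg_T_in[OF Tb]] by simp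
    have pu: "\<exists>bk\<in>AA T. pw u n = op_scaleC (l ^ n) Id1 + bk" for n
    proof (induction n)
      case 0 show ?case using alg_zero[OF Tb] by (intro bexI[of _ 0]) (auto intro: blinfun_eqI)
    next
      case (Suc n)
      then obtain bk where bk: "bk \<in> AA T" "pw u n = op_scaleC (l ^ n) Id1 + bk" by blast
      have "pw u (Suc n) = op_scaleC (l ^ Suc n) Id1 + (op_scaleC l bk + op_scaleC (l ^ n) b + (b o\<^sub>L bk))"
        unfolding pw.simps bk(2) unfolding u_def using bb
        by (intro blinfun_eqI) (simp add: blinfun.add_left blinfun.add_right bounded_ops_def
            scaleC_add_right scaleC_scaleC algebra_simps)
      moreover have "op_scaleC l bk + op_scaleC (l ^ n) b + (b o\<^sub>L bk) \<in> AA T"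
        by (intro alg_add alg_scale alg_compose Tb bk b)
      ultimately show ?case by blast
    qed
    obtain bk where bk: "bk \<in> AA T" "pw u k = op_scaleC (l ^ k) Id1 + bk" using pu by blast
    have "pw (u o\<^sub>L T) k = op_scaleC (l ^ k) (pw T k) + (bk o\<^sub>L pw T k)"
      unfolding pw_mult[OF cu] bk(2) by (rule blinfun_eqI) (simp add: blinfun.add_left)
    also have "\<dots> \<in> JJ T" by (intro J_lam Tb p bk)
    finally have "quasi_regular_in (AA T) (pw (u o\<^sub>L T) k)" by (rule J_qr[OF Tb])
    moreover have "u o\<^sub>L T \<in> AA T" unfolding zu[symmetric]
      by (intro alg_add alg_scale alg_compose Tb b alg_T_in)
    ultimately show ?thesis unfolding zu by (metis qr_from_pw k)
  qed
  thus ?thesis unfolding jacobson_radical_def using alg_T_in[OF Tb] by blast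
qed

lemma T_in_J_all:
  assumes TJ: "T \<in> JJ T"
  shows "JJ T = AA T"
proof -
  have pwJ: "k \<ge> 1 \<Longrightarrow> pw T k \<in> JJ T" for k
  proof (induction k)
    case (Suc k)
    show ?case
    proof (cases "k = 0")
      case True thus ?thesis using TJ by simp
    next
      case False
      hence "pw T k o\<^sub>L T \<in> JJ T" by (intro J_compose Tb TJ alg_pw) auto
      thus ?thesis by (simp add: pw_Suc'[symmetric] del: pw.simps)
    qed
  qed simp
  have "polys T \<subseteq> JJ T"
  proof
    fix x assume "x \<in> polys T"
    then obtain a n where x: "x = poly_op a n T" by (auto simp: polys_def)
    show "x \<in> JJ T" unfolding x poly_op_eq by (intro J_sum J_scale Tb pwJ) auto
  qed
  hence "closure (polys T) \<subseteq> JJ T" by (rule closure_minimal[OF _ closed_J[OF Tb]])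
  hence "AA T \<subseteq> JJ T" by (simp only: alg_T_polys)
  thus ?thesis using J_sub[OF Tb] by blast
qed

end


lemma cis_root_sum:
  assumes N: "N > 0"
  shows "(\<Sum>j<N. cis (2 * pi * real j * real_of_int e / real N)) = (if int N dvd e then of_nat N else 0)"
proof -
  define z where "z = cis (2 * pi * real_of_int e / real N)"
  have zj: "cis (2 * pi * real j * real_of_int e / real N) = z ^ j" for j
    unfolding z_def by (simp only: Complex.DeMoivre) (rule arg_cong[where f=cis], simp add: field_simps)
  show ?thesis
  proof (cases "int N dvd e")
    case True
    then obtain q where q: "e = int N * q" by blast
    have "z = cis (2 * pi * real_of_int q)" unfolding z_def q using N by (rule_tac arg_cong[where f=cis]) simp
    hence "z = 1" by (simp add: cis_multiple_2pi)
    thus ?thesis using True by (simp add: zj)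
  next
    case False
    have "z \<noteq> 1"
    proof
      assume "z = 1"
      hence "exp (\<i> * complex_of_real (2 * pi * real_of_int e / real N)) = 1"
        unfolding z_def cis_conv_exp .
      then obtain n where n: "2 * pi * real_of_int e / real N = real_of_int (2 * n) * pi"
        unfolding exp_eq_1 by auto
      hence "real_of_int e = real_of_int n * real N" using N by (simp add: field_simps)
      hence "e = n * int N" by (metis of_int_eq_iff of_int_mult of_int_of_nat_eq)
      thus False using False by simp
    qed
    moreover have "z ^ N = 1"
    proof -
      have "z ^ N = cis (2 * pi * real_of_int e)" unfolding z_def Complex.DeMoivre using N
        by (rule_tac arg_cong[where f=cis]) simp
      thus ?thesis by (simp add: cis_multiple_2pi)
    qed
    ultimately show ?thesis using False by (simp add: zj geometric_sum)
  qed
qed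

definition ee :: "nat \<Rightarrow> nat \<Rightarrow> complex" where
  "ee N j = cis (2 * pi * real j / real N)"

definition Dd :: "(complex \<Rightarrow> ('h::chilbert_space \<Rightarrow>\<^sub>L 'h) \<Rightarrow> ('h \<Rightarrow>\<^sub>L 'h)) \<Rightarrow> nat \<Rightarrow> int \<Rightarrow> ('h \<Rightarrow>\<^sub>L 'h) \<Rightarrow> ('h \<Rightarrow>\<^sub>L 'h)" where
  "Dd \<gamma> N d S = (1 / real N) *\<^sub>R (\<Sum>j<N. op_scaleC (cis (2 * pi * real j * real_of_int d / real N)) (\<gamma> (ee N j) S))"

lemma cmod_ee[simp]: "cmod (ee N j) = 1"
  by (simp add: ee_def)

lemma ee_pow_cis: "cis (2 * pi * real j * real_of_int d / real N) * ee N j ^ k =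
    cis (2 * pi * real j * real_of_int (d + int k) / real N)"
  unfolding ee_def Complex.DeMoivre cis_mult by (rule arg_cong[where f=cis]) (simp add: add_divide_distrib[symmetric] algebra_simps)

context
  fixes T :: "'h::chilbert_space \<Rightarrow>\<^sub>L 'h" and \<gamma>
  assumes Tb: "T \<in> bounded_ops" and ga: "gauge_action T \<gamma>"
begin

lemma g_bij: "cmod l = 1 \<Longrightarrow> bij_betw (\<gamma> l) (AA T) (AA T)"
  using ga unfolding gauge_action_def by blast
lemma g_add: "cmod l = 1 \<Longrightarrow> S \<in> AA T \<Longrightarrow> R \<in> AA T \<Longrightarrow> \<gamma> l (S + R) = \<gamma> l S + \<gamma> l R"
  using ga unfolding gauge_action_def by blast
lemma g_sc: "cmod l = 1 \<Longrightarrow> S \<in> AA T \<Longrightarrow> \<gamma> l (op_scaleC c S) = op_scaleC c (\<gamma> l S)"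
  using ga unfolding gauge_action_def by blast
lemma g_mul: "cmod l = 1 \<Longrightarrow> S \<in> AA T \<Longrightarrow> R \<in> AA T \<Longrightarrow> \<gamma> l (S o\<^sub>L R) = \<gamma> l S o\<^sub>L \<gamma> l R"
  using ga unfolding gauge_action_def by blast
lemma g_norm: "cmod l = 1 \<Longrightarrow> S \<in> AA T \<Longrightarrow> norm (\<gamma> l S) = norm S"
  using ga unfolding gauge_action_def by blast
lemma g_T: "cmod l = 1 \<Longrightarrow> \<gamma> l T = op_scaleC l T"
  using ga unfolding gauge_action_def by blast
lemma g_comp: "cmod l = 1 \<Longrightarrow> cmod m = 1 \<Longrightarrow> S \<in> AA T \<Longrightarrow> \<gamma> (l * m) S = \<gamma> l (\<gamma> m S)"
  using ga unfolding gauge_action_def by blast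
lemma g_cont: "S \<in> AA T \<Longrightarrow> continuous_on {l. cmod l = 1} (\<lambda>l. \<gamma> l S)"
  using ga unfolding gauge_action_def by blast

lemma g_A: "cmod l = 1 \<Longrightarrow> S \<in> AA T \<Longrightarrow> \<gamma> l S \<in> AA T"
  using g_bij by (auto simp: bij_betw_def)

lemma g_zero: "cmod l = 1 \<Longrightarrow> \<gamma> l 0 = 0"
  using g_add[of l 0 0] alg_zero[OF Tb] by simp

lemma g_diff: "cmod l = 1 \<Longrightarrow> S \<in> AA T \<Longrightarrow> R \<in> AA T \<Longrightarrow> \<gamma> l (S - R) = \<gamma> l S - \<gamma> l R"
  using g_add[of l "S - R" R] alg_diff[OF Tb, of S R] by (simp add: algebra_simps)

lemma g_sum: "cmod l = 1 \<Longrightarrow> (\<And>i. i \<in> I \<Longrightarrow> f i \<in> AA T) \<Longrightarrow> \<gamma> l (\<Sum>i\<in>I. f i) = (\<Sum>i\<in>I. \<gamma> l (f i))"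
proof (induction I rule: infinite_finite_induct)
  case (insert x F)
  thus ?case by (simp add: g_add alg_sum[OF Tb])
qed (auto simp: g_zero)

lemma g_one: "S \<in> AA T \<Longrightarrow> \<gamma> 1 S = S"
proof -
  assume S: "S \<in> AA T"
  have "\<gamma> 1 (\<gamma> 1 S) = \<gamma> 1 S" using g_comp[of 1 1 S] S by simp
  moreover have "inj_on (\<gamma> 1) (AA T)" using g_bij[of 1] by (simp add: bij_betw_def)
  ultimately show ?thesis using S g_A[of 1 S] by (auto dest: inj_onD)
qed

lemma g_pw: "cmod l = 1 \<Longrightarrow> k \<ge> 1 \<Longrightarrow> \<gamma> l (pw T k) = op_scaleC (l ^ k) (pw T k)"
proof (induction k)
  case (Suc k)
  show ?case
  proof (cases "k = 0")
    case True thus ?thesis using g_T[OF Suc.prems(1)] by simp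
  next
    case False
    have "\<gamma> l (pw T (Suc k)) = \<gamma> l T o\<^sub>L \<gamma> l (pw T k)"
      using False by (simp add: g_mul[OF Suc.prems(1)] alg_T_in[OF Tb] alg_pw[OF Tb])
    also have "\<dots> = op_scaleC l T o\<^sub>L op_scaleC (l ^ k) (pw T k)"
      using Suc False by (simp add: g_T)
    also have "\<dots> = op_scaleC (l ^ Suc k) (pw T (Suc k))"
      using Tb by (simp add: scale_compose_scale)
    finally show ?thesis .
  qed
qed simp

lemma g_poly: "cmod l = 1 \<Longrightarrow> \<gamma> l (poly_op a n T) = (\<Sum>k\<in>{1..n}. op_scaleC (a k * l ^ k) (pw T k))"
  unfolding poly_op_eq
  by (subst g_sum) (auto intro!: sum.cong alg_scale[OF Tb] alg_pw[OF Tb]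
      simp: g_sc g_pw alg_pw[OF Tb] op_scaleC_scaleC)

lemma g_J: "cmod l = 1 \<Longrightarrow> S \<in> JJ T \<Longrightarrow> \<gamma> l S \<in> JJ T"
  by (rule gauge_J[OF Tb]) (auto intro: g_bij g_add g_sc g_mul)

lemma Dd_A: "S \<in> AA T \<Longrightarrow> Dd \<gamma> N d S \<in> AA T"
  unfolding Dd_def op_scaleC_real[symmetric]
  by (intro alg_scale[OF Tb] alg_sum[OF Tb] g_A) auto

lemma Dd_J: "S \<in> JJ T \<Longrightarrow> Dd \<gamma> N d S \<in> JJ T"
  unfolding Dd_def op_scaleC_real[symmetric]
  by (intro J_scale[OF Tb] J_sum[OF Tb] g_J) auto

lemma Dd_diff: "S \<in> AA T \<Longrightarrow> R \<in> AA T \<Longrightarrow> Dd \<gamma> N d S - Dd \<gamma> N d R = Dd \<gamma> N d (S - R)"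
  unfolding Dd_def by (simp add: g_diff op_scaleC_diff_right sum_subtractf scaleR_diff_right)

lemma Dd_norm: "S \<in> AA T \<Longrightarrow> norm (Dd \<gamma> N d S) \<le> norm S"
proof -
  assume S: "S \<in> AA T"
  show ?thesis
  proof (cases "N = 0")
    case True thus ?thesis by (simp add: Dd_def)
  next
    case False
    have "norm (\<Sum>j<N. op_scaleC (cis (2 * pi * real j * real_of_int d / real N)) (\<gamma> (ee N j) S))
        \<le> (\<Sum>j<N. norm S)"
    proof (rule order_trans[OF norm_sum sum_mono])
      fix j
      show "norm (op_scaleC (cis (2 * pi * real j * real_of_int d / real N)) (\<gamma> (ee N j) S)) \<le> norm S"
        using norm_op_scaleC[of "cis (2 * pi * real j * real_of_int d / real N)" "\<gamma> (ee N j) S"]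
        by (simp add: g_norm S)
    qed
    thus ?thesis using False unfolding Dd_def by (simp add: field_simps)
  qed
qed

end


lemma norm_op_scaleC_eq: "norm (op_scaleC c (X::'h::chilbert_space \<Rightarrow>\<^sub>L 'h)) = cmod c * norm X"
proof (cases "c = 0")
  case False
  have "norm X = norm (op_scaleC (1 / c) (op_scaleC c X))" using False by (simp add: op_scaleC_scaleC)
  also have "\<dots> \<le> cmod (1 / c) * norm (op_scaleC c X)" by (rule norm_op_scaleC)
  finally have "cmod c * norm X \<le> norm (op_scaleC c X)" using False
    by (simp add: norm_divide field_simps)
  thus ?thesis using norm_op_scaleC[of c X] by linarith
qed simp

lemma line_closed:
  fixes X L :: "'h::chilbert_space \<Rightarrow>\<^sub>L 'h"
  assumes "\<forall>\<epsilon>>0. \<exists>c. norm (L - op_scaleC c X) \<le> \<epsilon>"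
  shows "\<exists>c. L = op_scaleC c X"
proof (cases "X = 0")
  case True
  hence "norm L \<le> \<epsilon>" if "\<epsilon> > 0" for \<epsilon> using assms that by auto
  hence "norm L \<le> 0" by (meson dense not_le)
  thus ?thesis using True by (intro exI[of _ 0]) simp
next
  case False
  define f where "f c = op_scaleC c X" for c
  have bl: "bounded_linear f"
  proof (rule bounded_linear_intro[where K="norm X"])
    show "f (x + y) = f x + f y" for x y unfolding f_def by (rule op_scaleC_add_left)
    show "f (r *\<^sub>R x) = r *\<^sub>R f x" for r x
      unfolding f_def by (simp add: scaleR_conv_of_real op_scaleC_scaleC[symmetric] op_scaleC_real)
    show "norm (f x) \<le> norm x * norm X" for x unfolding f_def by (simp add: norm_op_scaleC_eq)
  qed
  have "complete (f ` UNIV)"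
    by (rule complete_isometric_image[OF _ subspace_UNIV bl _ complete_UNIV, where e="norm X"])
      (use False in \<open>auto simp: f_def norm_op_scaleC_eq\<close>)
  hence cl: "closed (range f)" by (rule complete_imp_closed)
  have "L \<in> closure (range f)"
    unfolding closure_approachable
  proof (intro allI impI)
    fix e :: real assume "e > 0"
    then obtain c where "norm (L - op_scaleC c X) \<le> e / 2" using assms by (meson half_gt_zero)
    hence "dist (f c) L < e" using \<open>e > 0\<close> by (simp add: f_def dist_norm norm_minus_commute)
    thus "\<exists>y\<in>range f. dist y L < e" by blast
  qed
  thus ?thesis using cl by (auto simp: f_def)
qed

context
  fixes T :: "'h::chilbert_space \<Rightarrow>\<^sub>L 'h" and \<gamma>
  assumes Tb: "T \<in> bounded_ops" and ga: "gauge_action T \<gamma>"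
begin

lemma Dd_poly:
  assumes N: "N > n + nat \<bar>d\<bar>"
  shows "Dd \<gamma> N d (poly_op a n T) =
     op_scaleC (if d < 0 \<and> nat (-d) \<le> n then a (nat (-d)) else 0) (pw T (nat (-d)))"
proof -
  have N0: "N > 0" using N by simp
  have "Dd \<gamma> N d (poly_op a n T) = (1 / real N) *\<^sub>R (\<Sum>j<N. \<Sum>k\<in>{1..n}.
      op_scaleC (a k * cis (2 * pi * real j * real_of_int (d + int k) / real N)) (pw T k))"
  proof -
    have eq: "cis (2 * pi * real j * real_of_int d / real N) * (a k * ee N j ^ k) =
        a k * cis (2 * pi * real j * real_of_int (d + int k) / real N)" for j k
      by (subst ee_pow_cis[symmetric]) (simp only: mult_ac)
    show ?thesis
      unfolding Dd_def g_poly[OF Tb ga cmod_ee] op_scaleC_sum_right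
      by (simp only: op_scaleC_scaleC eq)
  qed
  also have "\<dots> = (1 / real N) *\<^sub>R (\<Sum>k\<in>{1..n}.
      op_scaleC (a k * (\<Sum>j<N. cis (2 * pi * real j * real_of_int (d + int k) / real N))) (pw T k))"
    by (subst sum.swap) (simp add: sum_distrib_left op_scaleC_sum_left)
  also have "\<dots> = (1 / real N) *\<^sub>R (\<Sum>k\<in>{1..n}.
      op_scaleC (a k * (if d + int k = 0 then of_nat N else 0)) (pw T k))"
  proof -
    have "int N dvd (d + int k) \<longleftrightarrow> d + int k = 0" if "k \<in> {1..n}" for k
    proof
      assume dv: "int N dvd (d + int k)"
      show "d + int k = 0"
      proof (rule ccontr)
        assume "d + int k \<noteq> 0"
        hence "\<bar>int N\<bar> \<le> \<bar>d + int k\<bar>" using dv by (rule dvd_imp_le_int)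
        thus False using N that by auto
      qed
    qed simp
    hence "(\<Sum>j<N. cis (2 * pi * real j * real_of_int (d + int k) / real N)) = (if d + int k = 0 then of_nat N else 0)"
      if "k \<in> {1..n}" for k
      using that by (subst cis_root_sum[OF N0]) simp
    thus ?thesis by (intro arg_cong[where f="\<lambda>x. _ *\<^sub>R x"] sum.cong refl) (simp only:)
  qed
  also have "\<dots> = (\<Sum>k\<in>{1..n}. (if d + int k = 0 then op_scaleC (a k) (pw T k) else 0))"
    unfolding op_scaleC_real[symmetric] op_scaleC_sum_right
    by (intro sum.cong refl) (use N0 in \<open>auto simp: op_scaleC_scaleC\<close>)
  also have "\<dots> = op_scaleC (if d < 0 \<and> nat (-d) \<le> n then a (nat (-d)) else 0) (pw T (nat (-d)))"
  proof (cases "d < 0 \<and> nat (-d) \<le> n")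
    case True
    have "(\<Sum>k\<in>{1..n}. (if d + int k = 0 then op_scaleC (a k) (pw T k) else 0)) =
       (\<Sum>k\<in>{1..n}. (if k = nat (-d) then op_scaleC (a k) (pw T k) else 0))"
      by (intro sum.cong refl) (use True in auto)
    also have "\<dots> = op_scaleC (a (nat (-d))) (pw T (nat (-d)))"
      using True by (subst sum.delta) auto
    finally show ?thesis using True by simp
  next
    case False
    have "(\<Sum>k\<in>{1..n}. (if d + int k = 0 then op_scaleC (a k) (pw T k) else 0)) = 0"
      by (intro sum.neutral) (use False in auto)
    moreover have "(if d < 0 \<and> nat (-d) \<le> n then a (nat (-d)) else 0) = 0" using False by meson
    ultimately show ?thesis by simp
  qed
  finally show ?thesis .
qed


lemma approx_poly:
  assumes S: "S \<in> AA T" and e: "e > 0"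
  shows "\<exists>a n. norm (S - poly_op a n T) < e"
proof -
  from S have "S \<in> closure (polys T)" by (simp add: alg_T_polys)
  then obtain P where P: "P \<in> polys T" "dist P S < e" using e unfolding closure_approachable by blast
  then obtain a n where "P = poly_op a n T" by (auto simp: polys_def)
  with P(2) have "norm (S - poly_op a n T) < e" by (simp add: dist_norm norm_minus_commute)
  thus ?thesis by blast
qed

lemma Dd_poly_ev:
  "\<forall>N\<ge>Suc (n + nat \<bar>d\<bar>). Dd \<gamma> N d (poly_op a n T) =
     op_scaleC (if d < 0 \<and> nat (-d) \<le> n then a (nat (-d)) else 0) (pw T (nat (-d)))"
  using Dd_poly by auto

lemma Dd_tendsto:
  assumes nT: "T \<notin> JJ T" and S: "S \<in> JJ T"
  shows "(\<lambda>N. Dd \<gamma> N d S) \<longlonglongrightarrow> 0"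
proof -
  have SA: "S \<in> AA T" using S J_sub[OF Tb] by blast
  define X where "X = pw T (nat (-d))"
  have pA: "poly_op a n T \<in> AA T" for a n using polys_sub_alg[OF Tb] by (auto simp: polys_def)
  have key: "\<exists>c N0. (d \<ge> 0 \<longrightarrow> c = 0) \<and> (\<forall>N\<ge>N0. norm (Dd \<gamma> N d S - op_scaleC c X) < e)" if e: "e > 0" for e
  proof -
    obtain a n where an: "norm (S - poly_op a n T) < e" using approx_poly[OF SA e] by blast
    define c where "c = (if d < 0 \<and> nat (-d) \<le> n then a (nat (-d)) else 0)"
    have "norm (Dd \<gamma> N d S - op_scaleC c X) < e" if N: "N \<ge> Suc (n + nat \<bar>d\<bar>)" for N
    proof -
      have "Dd \<gamma> N d (poly_op a n T) = op_scaleC c X"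
        using Dd_poly_ev[of n d a] N unfolding c_def X_def by blast
      hence "Dd \<gamma> N d S - op_scaleC c X = Dd \<gamma> N d (S - poly_op a n T)"
        using Dd_diff[OF Tb ga SA pA, of N d a n] by simp
      also have "norm \<dots> \<le> norm (S - poly_op a n T)" by (intro Dd_norm[OF Tb ga] alg_diff[OF Tb] SA pA)
      finally show ?thesis using an by simp
    qed
    moreover have "d \<ge> 0 \<longrightarrow> c = 0" by (simp add: c_def)
    ultimately show ?thesis by (intro exI[of _ c] exI[of _ "Suc (n + nat \<bar>d\<bar>)"]) blast
  qed
  have "Cauchy (\<lambda>N. Dd \<gamma> N d S)"
  proof (rule metric_CauchyI)
    fix e :: real assume e: "e > 0"
    obtain c N0 where cN: "\<forall>N\<ge>N0. norm (Dd \<gamma> N d S - op_scaleC c X) < e / 2"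
      using key[of "e/2"] e by auto
    have "dist (Dd \<gamma> m d S) (Dd \<gamma> n d S) < e" if "m \<ge> N0" "n \<ge> N0" for m n
    proof -
      have "dist (Dd \<gamma> m d S) (Dd \<gamma> n d S) \<le> norm (Dd \<gamma> m d S - op_scaleC c X) + norm (Dd \<gamma> n d S - op_scaleC c X)"
        using dist_triangle2[of "Dd \<gamma> m d S" "Dd \<gamma> n d S" "op_scaleC c X"] by (simp add: dist_norm)
      moreover have "norm (Dd \<gamma> m d S - op_scaleC c X) < e / 2" "norm (Dd \<gamma> n d S - op_scaleC c X) < e / 2"
        using cN that by auto
      ultimately show ?thesis by linarith
    qed
    thus "\<exists>M. \<forall>m\<ge>M. \<forall>n\<ge>M. dist (Dd \<gamma> m d S) (Dd \<gamma> n d S) < e" by blast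
  qed
  then obtain L where L: "(\<lambda>N. Dd \<gamma> N d S) \<longlonglongrightarrow> L" using Cauchy_convergent_iff convergent_def by blast
  have LJ: "L \<in> JJ T" by (rule closed_sequentially[OF closed_J[OF Tb] _ L]) (rule Dd_J[OF Tb ga S])
  have bnd: "\<exists>c. (d \<ge> 0 \<longrightarrow> c = 0) \<and> norm (L - op_scaleC c X) \<le> e" if e: "e > 0" for e
  proof -
    obtain c N0 where cN: "d \<ge> 0 \<longrightarrow> c = 0" "\<forall>N\<ge>N0. norm (Dd \<gamma> N d S - op_scaleC c X) < e"
      using key[OF e] by blast
    have "(\<lambda>N. norm (Dd \<gamma> N d S - op_scaleC c X)) \<longlonglongrightarrow> norm (L - op_scaleC c X)"
      by (intro tendsto_intros L)
    moreover have "eventually (\<lambda>N. norm (Dd \<gamma> N d S - op_scaleC c X) \<le> e) sequentially"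
      using cN(2) unfolding eventually_sequentially by (meson less_imp_le)
    ultimately have "norm (L - op_scaleC c X) \<le> e" by (rule tendsto_upperbound) simp
    with cN(1) show ?thesis by blast
  qed
  have "L = 0"
  proof (cases "d \<ge> 0")
    case True
    hence "norm L \<le> e" if "e > 0" for e using bnd[OF that] by auto
    hence "norm L \<le> 0" by (meson dense not_le)
    thus ?thesis by simp
  next
    case False
    obtain c where Lc: "L = op_scaleC c X" using line_closed[of L X] bnd by blast
    show ?thesis
    proof (cases "c = 0")
      case False
      have "X = op_scaleC (1 / c) L" using False by (simp add: Lc op_scaleC_scaleC)
      hence "pw T (nat (-d)) \<in> JJ T" unfolding X_def using J_scale[OF Tb LJ] by simp
      hence "T \<in> JJ T" by (rule semiprime_T[OF Tb, rotated]) (use \<open>\<not> d \<ge> 0\<close> in simp)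
      with nT show ?thesis by blast
    qed (simp add: Lc)
  qed
  with L show ?thesis by simp
qed

end


definition Kf :: "nat \<Rightarrow> complex \<Rightarrow> real" where
  "Kf n z = (cmod (\<Sum>m<n. z ^ m))\<^sup>2 / real n"

lemma Kf_nonneg: "Kf n z \<ge> 0"
  by (simp add: Kf_def)

lemma kern_expand:
  "complex_of_real ((cmod (\<Sum>m<n. ee N j ^ m))\<^sup>2) =
     (\<Sum>m'<n. \<Sum>m<n. cis (2 * pi * real j * real_of_int (int m' - int m) / real N))"
proof -
  have e: "ee N j ^ m' * cnj (ee N j ^ m) = cis (2 * pi * real j * real_of_int (int m' - int m) / real N)" for m m'
  proof -
    have "ee N j ^ m' * cnj (ee N j ^ m) = cis (real m' * (2 * pi * real j / real N) + - (real m * (2 * pi * real j / real N)))"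
      unfolding ee_def Complex.DeMoivre cis_cnj cis_mult ..
    also have "\<dots> = cis (2 * pi * real j * real_of_int (int m' - int m) / real N)"
      by (rule arg_cong[where f=cis]) (simp add: algebra_simps diff_divide_distrib)
    finally show ?thesis .
  qed
  show ?thesis unfolding complex_norm_square cnj_sum sum_product e ..
qed

lemma kern_bound:
  assumes z: "cmod z = 1" "z \<noteq> 1"
  shows "cmod (\<Sum>m<n. z ^ m) \<le> 2 / cmod (z - 1)"
proof -
  have "cmod (z ^ n - 1) \<le> 2"
    using norm_triangle_ineq4[of "z ^ n" 1] z(1) by (simp add: norm_power)
  moreover have "cmod (z - 1) > 0" using z(2) by simp
  ultimately show ?thesis using z(2) by (simp add: geometric_sum norm_divide divide_right_mono)
qed

lemma Kf_bound:
  assumes z: "cmod z = 1" "cmod (z - 1) \<ge> \<delta>" "\<delta> > 0" and n: "n > 0"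
  shows "Kf n z \<le> 4 / (real n * \<delta>\<^sup>2)"
proof -
  have z1: "z \<noteq> 1" using z by auto
  have "cmod (\<Sum>m<n. z ^ m) \<le> 2 / \<delta>"
  proof -
    have zp: "cmod (z - 1) > 0" using z by linarith
    have "2 / cmod (z - 1) \<le> 2 / \<delta>" by (rule divide_left_mono) (use z zp in auto)
    thus ?thesis using kern_bound[OF z(1) z1, of n] by linarith
  qed
  hence "(cmod (\<Sum>m<n. z ^ m))\<^sup>2 \<le> (2 / \<delta>)\<^sup>2" by (intro power_mono) auto
  thus ?thesis using n unfolding Kf_def by (simp add: power_divide divide_right_mono field_simps)
qed

lemma Kf_mass:
  assumes n: "n > 0" "n \<le> N"
  shows "(\<Sum>j<N. Kf n (ee N j)) = real N"
proof -
  have N: "N > 0" using n by simp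
  have "complex_of_real (\<Sum>j<N. Kf n (ee N j)) =
      (\<Sum>j<N. \<Sum>m'<n. \<Sum>m<n. cis (2 * pi * real j * real_of_int (int m' - int m) / real N)) / of_nat n"
  proof -
    have "complex_of_real (Kf n (ee N j)) =
        (\<Sum>m'<n. \<Sum>m<n. cis (2 * pi * real j * real_of_int (int m' - int m) / real N)) / of_nat n" for j
      unfolding Kf_def of_real_divide kern_expand[symmetric] by simp
    thus ?thesis unfolding of_real_sum sum_divide_distrib by simp
  qed
  also have "(\<Sum>j<N. \<Sum>m'<n. \<Sum>m<n. cis (2 * pi * real j * real_of_int (int m' - int m) / real N)) =
      (\<Sum>m'<n. \<Sum>m<n. \<Sum>j<N. cis (2 * pi * real j * real_of_int (int m' - int m) / real N))"
    by (subst sum.swap) (rule sum.cong[OF refl], rule sum.swap)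
  also have "\<dots> = (\<Sum>m'<n. \<Sum>m<n. (if m = m' then of_nat N else 0))"
  proof (intro sum.cong refl)
    fix m m' assume m: "m \<in> {..<n}" "m' \<in> {..<n}"
    have "int N dvd (int m' - int m) \<longleftrightarrow> m = m'"
    proof
      assume dv: "int N dvd (int m' - int m)"
      show "m = m'"
      proof (rule ccontr)
        assume "m \<noteq> m'"
        hence "int m' - int m \<noteq> 0" by simp
        hence "\<bar>int N\<bar> \<le> \<bar>int m' - int m\<bar>" using dv by (rule dvd_imp_le_int)
        thus False using m n by auto
      qed
    qed simp
    thus "(\<Sum>j<N. cis (2 * pi * real j * real_of_int (int m' - int m) / real N)) = (if m = m' then of_nat N else 0)"
      by (subst cis_root_sum[OF N]) simp
  qed
  also have "\<dots> = of_nat n * of_nat N" by simp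
  finally have "complex_of_real (\<Sum>j<N. Kf n (ee N j)) = of_real (real N)" using n by simp
  thus ?thesis by (simp only: of_real_eq_iff)
qed



context
  fixes T :: "'h::chilbert_space \<Rightarrow>\<^sub>L 'h" and \<gamma>
  assumes Tb: "T \<in> bounded_ops" and ga: "gauge_action T \<gamma>"
begin

lemma sig_eq:
  assumes n: "n > 0"
  shows "(1 / real n) *\<^sub>R (\<Sum>m'<n. \<Sum>m<n. Dd \<gamma> N (int m' - int m) S) =
    (1 / real N) *\<^sub>R (\<Sum>j<N. Kf n (ee N j) *\<^sub>R \<gamma> (ee N j) S)"
proof -
  have "(\<Sum>m'<n. \<Sum>m<n. Dd \<gamma> N (int m' - int m) S) =
     (1 / real N) *\<^sub>R (\<Sum>m'<n. \<Sum>m<n. \<Sum>j<N. op_scaleC (cis (2 * pi * real j * real_of_int (int m' - int m) / real N)) (\<gamma> (ee N j) S))"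
    unfolding Dd_def scaleR_sum_right ..
  also have "(\<Sum>m'<n. \<Sum>m<n. \<Sum>j<N. op_scaleC (cis (2 * pi * real j * real_of_int (int m' - int m) / real N)) (\<gamma> (ee N j) S))
     = (\<Sum>j<N. \<Sum>m'<n. \<Sum>m<n. op_scaleC (cis (2 * pi * real j * real_of_int (int m' - int m) / real N)) (\<gamma> (ee N j) S))"
    by (subst sum.swap) (rule sum.cong[OF refl], rule sum.swap)
  also have "\<dots> = (\<Sum>j<N. op_scaleC (complex_of_real ((cmod (\<Sum>m<n. ee N j ^ m))\<^sup>2)) (\<gamma> (ee N j) S))"
    unfolding kern_expand op_scaleC_sum_left ..
  also have "\<dots> = real n *\<^sub>R (\<Sum>j<N. Kf n (ee N j) *\<^sub>R \<gamma> (ee N j) S)"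
    unfolding op_scaleC_real scaleR_sum_right Kf_def using n by (simp add: scaleR_scaleR)
  finally show ?thesis using n by (simp add: scaleR_scaleR mult.commute)
qed

lemma main_fejer:
  assumes nT: "T \<notin> JJ T" and S: "S \<in> JJ T"
  shows "S = 0"
proof -
  have SA: "S \<in> AA T" using S J_sub[OF Tb] by blast
  define \<sigma> where "\<sigma> n N = (1 / real N) *\<^sub>R (\<Sum>j<N. Kf n (ee N j) *\<^sub>R \<gamma> (ee N j) S)" for n N
  have lim: "(\<lambda>N. \<sigma> n N) \<longlonglongrightarrow> 0" if n: "n > 0" for n
  proof -
    have "(\<lambda>N. (1 / real n) *\<^sub>R (\<Sum>m'<n. \<Sum>m<n. Dd \<gamma> N (int m' - int m) S)) \<longlonglongrightarrow> (1 / real n) *\<^sub>R 0"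
      by (intro tendsto_scaleR tendsto_const tendsto_null_sum Dd_tendsto[OF Tb ga nT S])
    thus ?thesis unfolding \<sigma>_def sig_eq[OF n] by simp
  qed
  have cont: "continuous_on {l. cmod l = 1} (\<lambda>l. \<gamma> l S)" by (rule g_cont[OF Tb ga SA])
  have g1: "\<gamma> 1 S = S" by (rule g_one[OF Tb ga SA])
  have gn: "norm (\<gamma> (ee N j) S) = norm S" for N j by (rule g_norm[OF Tb ga cmod_ee SA])
  have small: "norm S \<le> 2 * \<epsilon>" if e: "\<epsilon> > 0" for \<epsilon>
  proof -
    have one: "(1::complex) \<in> {l. cmod l = 1}" by simp
    obtain \<delta> where d0: "\<delta> > 0" "\<forall>x'\<in>{l. cmod l = 1}. dist x' 1 < \<delta> \<longrightarrow> dist (\<gamma> x' S) (\<gamma> 1 S) < \<epsilon>"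
      using cont[unfolded continuous_on_iff, rule_format, OF one e] by blast
    have d: "\<delta> > 0" "\<And>l. cmod l = 1 \<Longrightarrow> dist l 1 < \<delta> \<Longrightarrow> dist (\<gamma> l S) S < \<epsilon>"
      using d0 g1 by auto
    define C where "C n = 8 * norm S / (real n * \<delta>\<^sup>2)" for n :: nat
    have est: "norm (S - \<sigma> n N) \<le> \<epsilon> + C n" if n: "n > 0" "n \<le> N" for n N
    proof -
      have N: "N > 0" using n by simp
      have mass: "(\<Sum>j<N. Kf n (ee N j)) = real N" by (rule Kf_mass) (use n in auto)
      have Seq: "S = (1 / real N) *\<^sub>R (\<Sum>j<N. Kf n (ee N j) *\<^sub>R S)"
        unfolding scaleR_sum_left[symmetric] mass using N by simp
      have e1: "(1 / real N) *\<^sub>R (\<Sum>j<N. Kf n (ee N j) *\<^sub>R S) - \<sigma> n N =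
          (1 / real N) *\<^sub>R (\<Sum>j<N. Kf n (ee N j) *\<^sub>R (S - \<gamma> (ee N j) S))"
        unfolding \<sigma>_def by (simp only: scaleR_diff_right[symmetric] sum_subtractf[symmetric])
      have "S - \<sigma> n N = (1 / real N) *\<^sub>R (\<Sum>j<N. Kf n (ee N j) *\<^sub>R S) - \<sigma> n N"
        using Seq by (rule arg_cong[where f="\<lambda>x. x - \<sigma> n N"])
      hence "S - \<sigma> n N = (1 / real N) *\<^sub>R (\<Sum>j<N. Kf n (ee N j) *\<^sub>R (S - \<gamma> (ee N j) S))"
        using e1 by (rule trans)
      also have "norm \<dots> \<le> (1 / real N) * (\<Sum>j<N. \<epsilon> * Kf n (ee N j) + C n)"
      proof -
        have "norm (\<Sum>j<N. Kf n (ee N j) *\<^sub>R (S - \<gamma> (ee N j) S)) \<le> (\<Sum>j<N. \<epsilon> * Kf n (ee N j) + C n)"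
        proof (rule order_trans[OF norm_sum sum_mono])
          fix j
          have K0: "Kf n (ee N j) \<ge> 0" by (rule Kf_nonneg)
          have C0: "C n \<ge> 0" by (simp add: C_def)
          have "Kf n (ee N j) * norm (S - \<gamma> (ee N j) S) \<le> \<epsilon> * Kf n (ee N j) + C n"
          proof (cases "dist (ee N j) 1 < \<delta>")
            case True
            hence "norm (S - \<gamma> (ee N j) S) \<le> \<epsilon>"
              using d(2)[OF cmod_ee True] by (simp add: dist_norm norm_minus_commute)
            hence "Kf n (ee N j) * norm (S - \<gamma> (ee N j) S) \<le> Kf n (ee N j) * \<epsilon>"
              by (intro mult_left_mono K0)
            thus ?thesis using C0 by (simp add: mult.commute)
          next
            case False
            hence "cmod (ee N j - 1) \<ge> \<delta>" by (simp add: dist_norm)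
            hence Kb: "Kf n (ee N j) \<le> 4 / (real n * \<delta>\<^sup>2)" by (intro Kf_bound cmod_ee d(1) n(1))
            have nb: "norm (S - \<gamma> (ee N j) S) \<le> 2 * norm S"
              using norm_triangle_ineq4[of S "\<gamma> (ee N j) S"] gn by simp
            have "Kf n (ee N j) * norm (S - \<gamma> (ee N j) S) \<le> (4 / (real n * \<delta>\<^sup>2)) * (2 * norm S)"
              by (intro mult_mono Kb nb) auto
            also have "\<dots> = C n" by (simp add: C_def)
            finally show ?thesis using e K0 by (smt (verit) mult_nonneg_nonneg)
          qed
          thus "norm (Kf n (ee N j) *\<^sub>R (S - \<gamma> (ee N j) S)) \<le> \<epsilon> * Kf n (ee N j) + C n"
            using K0 by simp
        qed
        thus ?thesis using N by (simp add: divide_right_mono)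
      qed
      also have "\<dots> = \<epsilon> + C n"
        using N by (simp add: sum.distrib sum_distrib_left[symmetric] mass field_simps)
      finally show ?thesis .
    qed
    have bnd: "norm S \<le> \<epsilon> + C n" if n: "n > 0" for n
    proof -
      have "(\<lambda>N. norm (S - \<sigma> n N)) \<longlonglongrightarrow> norm (S - 0)"
        by (intro tendsto_intros lim n)
      moreover have "eventually (\<lambda>N. norm (S - \<sigma> n N) \<le> \<epsilon> + C n) sequentially"
        unfolding eventually_sequentially using est n by blast
      ultimately show ?thesis by (simp add: tendsto_upperbound)
    qed
    obtain m :: nat where m: "real m > 8 * norm S / (\<delta>\<^sup>2 * \<epsilon>)" using reals_Archimedean2 by blast
    define n where "n = Suc m"
    have n: "real n > 8 * norm S / (\<delta>\<^sup>2 * \<epsilon>)" "n > 0" using m by (auto simp: n_def)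
    have "C n \<le> \<epsilon>"
    proof -
      have pos: "\<delta>\<^sup>2 * \<epsilon> > 0" using d(1) e by simp
      have "8 * norm S < real n * (\<delta>\<^sup>2 * \<epsilon>)" using n(1) pos by (simp add: divide_less_eq)
      thus ?thesis unfolding C_def using n(2) d(1) by (simp add: divide_le_eq mult_ac)
    qed
    thus ?thesis using bnd[OF n(2)] by simp
  qed
  have "norm S \<le> 0"
  proof (rule ccontr)
    assume "\<not> norm S \<le> 0"
    hence "norm S > 0" by simp
    thus False using small[of "norm S / 4"] by simp
  qed
  thus ?thesis by simp
qed

end

theorem mainTheorem4:
  fixes T :: "'h::chilbert_space \<Rightarrow>\<^sub>L 'h"
  assumes "T \<in> bounded_ops"
    and "\<exists>\<gamma>. gauge_action T \<gamma>"
  shows "jacobson_radical (alg_T T) = {0} \<or> jacobson_radical (alg_T T) = alg_T T"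
proof -
  obtain \<gamma> where ga: "gauge_action T \<gamma>" using assms(2) by blast
  show ?thesis
  proof (cases "T \<in> JJ T")
    case True thus ?thesis using T_in_J_all[OF assms(1)] by blast
  next
    case False
    have "JJ T = {0}" using main_fejer[OF assms(1) ga False] J_zero[OF assms(1)] by blast
    thus ?thesis by blast
  qed
qed


end
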